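(* Let $\mathcal{A}$ be a complete rpoNFA with a single initial state and depth $k$. Then $L(\mathcal{A})$ is $k$-$\mathcal{R}$-trivial.
   Context: An NFA $\mathcal{A}=(Q,\Sigma,\cdot,I,F)$ is complete if $q\cdot a\neq\emptyset$ for all $q,a$. A poNFA is an NFA whose reachability relation is a partial order (only self-loops as cycles); an rpoNFA is a poNFA such that $q\in q\cdot a$ implies $q\cdot a=\{q\}$. The depth is the number of input symbols on a longest simple path (pairwise distinct states) starting in an initial state. $\mathrm{sub}_k(v)$ is the set of subsequences of $v$ of length at most $k$; $u\sim_k v$ iff $\mathrm{sub}_k(u)=\mathrm{sub}_k(v)$; $x\sim^{\mathcal{R}}_k y$ iff each prefix of $x$ is $\sim_k$-equivalent to some prefix of $y$ and vice versa. A language is $k$-$\mathcal{R}$-trivial if it is a union of $\sim^{\mathcal{R}}_k$-classes. *)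

theory Defs
  imports Main
begin

definition nfa :: "'q set \<Rightarrow> 'a set \<Rightarrow> ('q \<Rightarrow> 'a \<Rightarrow> 'q set) \<Rightarrow> 'q set \<Rightarrow> 'q set \<Rightarrow> bool" where
  "nfa Q Sig delta I F \<longleftrightarrow> finite Q \<and> finite Sig \<and> I \<subseteq> Q \<and> F \<subseteq> Q \<and>
     (\<forall>q\<in>Q. \<forall>a\<in>Sig. delta q a \<subseteq> Q)"

definition complete_nfa :: "'q set \<Rightarrow> 'a set \<Rightarrow> ('q \<Rightarrow> 'a \<Rightarrow> 'q set) \<Rightarrow> bool" where
  "complete_nfa Q Sig delta \<longleftrightarrow> (\<forall>q\<in>Q. \<forall>a\<in>Sig. delta q a \<noteq> {})"

fun delta_star :: "('q \<Rightarrow> 'a \<Rightarrow> 'q set) \<Rightarrow> 'q set \<Rightarrow> 'a list \<Rightarrow> 'q set" where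
  "delta_star delta S [] = S"
| "delta_star delta S (a # w) = delta_star delta (\<Union>q\<in>S. delta q a) w"

definition lang :: "'a set \<Rightarrow> ('q \<Rightarrow> 'a \<Rightarrow> 'q set) \<Rightarrow> 'q set \<Rightarrow> 'q set \<Rightarrow> 'a list set" where
  "lang Sig delta I F = {w \<in> lists Sig. delta_star delta I w \<inter> F \<noteq> {}}"

definition reach :: "'a set \<Rightarrow> ('q \<Rightarrow> 'a \<Rightarrow> 'q set) \<Rightarrow> 'q \<Rightarrow> 'q \<Rightarrow> bool" where
  "reach Sig delta p q \<longleftrightarrow> (\<exists>w \<in> lists Sig. q \<in> delta_star delta {p} w)"

text \<open>poNFA: the reachability relation (reflexive and transitive by construction)
  is a partial order on Q, i.e. antisymmetric.\<close>
definition po_nfa :: "'q set \<Rightarrow> 'a set \<Rightarrow> ('q \<Rightarrow> 'a \<Rightarrow> 'q set) \<Rightarrow> 'q set \<Rightarrow> 'q set \<Rightarrow> bool" where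
  "po_nfa Q Sig delta I F \<longleftrightarrow> nfa Q Sig delta I F \<and>
     (\<forall>p\<in>Q. \<forall>q\<in>Q. reach Sig delta p q \<and> reach Sig delta q p \<longrightarrow> p = q)"

definition rpo_nfa :: "'q set \<Rightarrow> 'a set \<Rightarrow> ('q \<Rightarrow> 'a \<Rightarrow> 'q set) \<Rightarrow> 'q set \<Rightarrow> 'q set \<Rightarrow> bool" where
  "rpo_nfa Q Sig delta I F \<longleftrightarrow> po_nfa Q Sig delta I F \<and>
     (\<forall>q\<in>Q. \<forall>a\<in>Sig. q \<in> delta q a \<longrightarrow> delta q a = {q})"

definition simple_path_from_init ::
  "'a set \<Rightarrow> ('q \<Rightarrow> 'a \<Rightarrow> 'q set) \<Rightarrow> 'q set \<Rightarrow> 'q list \<Rightarrow> 'a list \<Rightarrow> bool" where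
  "simple_path_from_init Sig delta I qs w \<longleftrightarrow>
     length qs = Suc (length w) \<and> w \<in> lists Sig \<and> hd qs \<in> I \<and> distinct qs \<and>
     (\<forall>i < length w. qs ! Suc i \<in> delta (qs ! i) (w ! i))"

definition depth :: "'a set \<Rightarrow> ('q \<Rightarrow> 'a \<Rightarrow> 'q set) \<Rightarrow> 'q set \<Rightarrow> nat" where
  "depth Sig delta I = Max {length w | w qs. simple_path_from_init Sig delta I qs w}"

definition sub_k :: "nat \<Rightarrow> 'a list \<Rightarrow> 'a list set" where
  "sub_k k v = {u \<in> set (subseqs v). length u \<le> k}"

definition sim_k :: "nat \<Rightarrow> 'a list \<Rightarrow> 'a list \<Rightarrow> bool" where
  "sim_k k u v \<longleftrightarrow> sub_k k u = sub_k k v"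

definition sim_R_k :: "nat \<Rightarrow> 'a list \<Rightarrow> 'a list \<Rightarrow> bool" where
  "sim_R_k k x y \<longleftrightarrow>
     (\<forall>i \<le> length x. \<exists>j \<le> length y. sim_k k (take i x) (take j y)) \<and>
     (\<forall>j \<le> length y. \<exists>i \<le> length x. sim_k k (take j y) (take i x))"

definition k_R_trivial :: "nat \<Rightarrow> 'a set \<Rightarrow> 'a list set \<Rightarrow> bool" where
  "k_R_trivial k Sig L \<longleftrightarrow>
     (\<forall>x \<in> lists Sig. \<forall>y \<in> lists Sig. sim_R_k k x y \<longrightarrow> (x \<in> L \<longleftrightarrow> y \<in> L))"

end

theory Submission imports Defs "HOL-Library.Sublist" begin

lemma sub_k_mem: "s \<in> sub_k n u \<longleftrightarrow> subseq s u \<and> length s \<le> n"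
  by (simp add: sub_k_def)

lemma sub_k_le: "m \<le> n \<Longrightarrow> sub_k m u = {s \<in> sub_k n u. length s \<le> m}"
  unfolding sub_k_def by auto

lemma sim_k_mono: "m \<le> n \<Longrightarrow> sim_k n u v \<Longrightarrow> sim_k m u v"
  unfolding sim_k_def by (simp add: sub_k_le[of m n])

lemma sim_k_letter: "1 \<le> n \<Longrightarrow> sim_k n u v \<Longrightarrow> c \<in> set u \<Longrightarrow> c \<in> set v"
proof -
  assume "1 \<le> n" "sim_k n u v" "c \<in> set u"
  then have "[c] \<in> sub_k n u" by (simp add: sub_k_mem subseq_singleton_left)
  then have "[c] \<in> sub_k n v" using \<open>sim_k n u v\<close> by (simp add: sim_k_def)
  then show ?thesis by (simp add: sub_k_mem subseq_singleton_left)
qed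

lemma sim_k_sym: "sim_k n u v \<Longrightarrow> sim_k n v u"
  by (simp add: sim_k_def)

lemma sim_R_k_sym: "sim_R_k n x y \<Longrightarrow> sim_R_k n y x"
  by (simp add: sim_R_k_def)

lemma sim_R_k_letter: "1 \<le> n \<Longrightarrow> sim_R_k n x y \<Longrightarrow> c \<in> set y \<Longrightarrow> c \<in> set x"
proof -
  assume a: "1 \<le> n" "sim_R_k n x y" "c \<in> set y"
  then obtain i where "i \<le> length x" "sim_k n y (take i x)"
    unfolding sim_R_k_def by (metis order_refl take_all)
  then show ?thesis using a sim_k_letter by (metis in_set_takeD)
qed

lemma subseq_skip: "a \<notin> set y0 \<Longrightarrow> subseq (a # s) (y0 @ a # v) \<Longrightarrow> subseq s v"
  by (induct y0) (auto simp: subseq_Cons')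

lemma sim_k_strip:
  assumes "1 \<le> n" "a \<notin> set x0" "a \<notin> set y0" "sim_k n (x0 @ a # u) (y0 @ a # v)"
  shows "sim_k (n - 1) u v"
  unfolding sim_k_def
proof (rule set_eqI)
  fix s
  have "s \<in> sub_k (n-1) u \<longleftrightarrow> (a # s) \<in> sub_k n (x0 @ a # u)"
    using assms(1,2) by (auto simp: sub_k_mem intro: subseq_skip list_emb_append2)
  moreover have "s \<in> sub_k (n-1) v \<longleftrightarrow> (a # s) \<in> sub_k n (y0 @ a # v)"
    using assms(1,3) by (auto simp: sub_k_mem intro: subseq_skip list_emb_append2)
  ultimately show "s \<in> sub_k (n-1) u \<longleftrightarrow> s \<in> sub_k (n-1) v"
    using assms(4) by (simp add: sim_k_def)
qed

lemma take_prefix_a: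
  assumes "a \<in> set (take j (y0 @ a # y'))" "a \<notin> set y0"
  shows "take j (y0 @ a # y') = y0 @ a # take (j - length y0 - 1) y'"
proof -
  have "j > length y0"
  proof (rule ccontr)
    assume "\<not> ?thesis" then have "take j (y0 @ a # y') = take j y0" by simp
    with assms show False by (metis in_set_takeD)
  qed
  then show ?thesis by (cases "j - length y0") (auto simp: take_Cons')
qed

lemma half:
  assumes "\<forall>i\<le>length x. \<exists>j\<le>length y. sim_k n (take i x) (take j y)"
    and "x = x0 @ a # x'" "y = y0 @ a # y'" "a \<notin> set x0" "a \<notin> set y0" "1 \<le> n"
  shows "\<forall>i\<le>length x'. \<exists>j\<le>length y'. sim_k (n-1) (take i x') (take j y')"
proof (intro allI impI)
  fix i assume i: "i \<le> length x'"
  have "take (length x0 + 1 + i) x = x0 @ a # take i x'" using assms(2) by simp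
  moreover have "length x0 + 1 + i \<le> length x" using assms(2) i by simp
  ultimately obtain j where j: "j \<le> length y" "sim_k n (x0 @ a # take i x') (take j y)"
    using assms(1) by metis
  have "a \<in> set (take j y)" using sim_k_letter[OF assms(6) j(2)] by simp
  then have tj: "take j y = y0 @ a # take (j - length y0 - 1) y'"
    using take_prefix_a assms(3,5) by metis
  have "sim_k (n-1) (take i x') (take (j - length y0 - 1) y')"
    using sim_k_strip[OF assms(6,4,5)] j(2) tj by simp
  moreover have "take (j - length y0 - 1) y' = take (min (j - length y0 - 1) (length y')) y'"
    by (simp add: min_def)
  ultimately show "\<exists>j\<le>length y'. sim_k (n-1) (take i x') (take j y')"
    by (metis min.cobounded2)
qed

lemma delta_star_union: "delta_star delta S w = (\<Union>q\<in>S. delta_star delta {q} w)"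
proof (induct w arbitrary: S)
  case Nil then show ?case by simp
next
  case (Cons a w)
  show ?case by (simp add: Cons[of "\<Union>q\<in>S. delta q a"] Cons[of "delta _ a"])
qed

lemma delta_star_append: "delta_star delta S (u @ v) = delta_star delta (delta_star delta S u) v"
  by (induct u arbitrary: S) auto

lemma delta_star_mono: "S \<subseteq> T \<Longrightarrow> delta_star delta S w \<subseteq> delta_star delta T w"
  by (metis delta_star_union SUP_subset_mono order_refl)

lemma delta_star_loop:
  assumes "\<forall>c\<in>set x. delta q c = {q}"
  shows "delta_star delta {q} x = {q}"
  using assms by (induct x) auto

lemma path_in_Q:
  assumes "nfa Q Sig delta I F" "simple_path_from_init Sig delta I qs w"
  shows "\<forall>j < length qs. qs ! j \<in> Q"
proof (intro allI impI)
  fix j assume "j < length qs"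
  then show "qs ! j \<in> Q"
  proof (induct j)
    case 0 with assms show ?case
      by (auto simp: nfa_def simple_path_from_init_def) (metis hd_conv_nth length_0_conv nat.distinct(1) subsetD)
  next
    case (Suc j)
    then have "qs ! j \<in> Q" by simp
    moreover have "j < length w" "w ! j \<in> Sig" using Suc.prems assms(2)
      by (auto simp: simple_path_from_init_def)
    ultimately show ?case using assms Suc.prems unfolding nfa_def simple_path_from_init_def
      by (meson nth_mem subsetD)
  qed
qed

lemma path_reach:
  assumes "simple_path_from_init Sig delta I qs w"
  shows "\<forall>j \<le> length w. qs ! length w \<in> delta_star delta {qs ! j} (drop j w)"
proof -
  have "qs ! length w \<in> delta_star delta {qs ! (length w - m)} (drop (length w - m) w)" for m
  proof (induct m)
    case 0 then show ?case by simp
  next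
    case (Suc m)
    show ?case
    proof (cases "m < length w")
      case True
      define j where "j = length w - Suc m"
      have jm: "length w - m = Suc j" using True j_def by simp
      have "j < length w" using True j_def by simp
      then have dr: "drop j w = w ! j # drop (Suc j) w" by (simp add: Cons_nth_drop_Suc)
      have "qs ! Suc j \<in> delta (qs ! j) (w ! j)" using assms \<open>j < length w\<close>
        by (simp add: simple_path_from_init_def)
      then have "delta_star delta {qs ! Suc j} (drop (Suc j) w) \<subseteq> delta_star delta {qs ! j} (drop j w)"
        by (simp add: dr delta_star_mono)
      then show ?thesis using Suc jm j_def by auto
    next
      case False then show ?thesis using Suc by simp
    qed
  qed
  from this[of "length w - _"] show ?thesis by (metis diff_diff_cancel)
qed

lemma depth_ge:
  assumes "nfa Q Sig delta I F" "simple_path_from_init Sig delta I qs w"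
  shows "length w \<le> depth Sig delta I"
proof -
  let ?S = "{length w | w qs. simple_path_from_init Sig delta I qs w}"
  have "?S \<subseteq> {..card Q}"
  proof
    fix l assume "l \<in> ?S"
    then obtain w' qs' where l: "l = length w'" and p: "simple_path_from_init Sig delta I qs' w'" by blast
    have "set qs' \<subseteq> Q" using path_in_Q[OF assms(1) p] by (auto simp: in_set_conv_nth)
    then have "card (set qs') \<le> card Q" using assms(1) by (simp add: nfa_def card_mono)
    moreover have "card (set qs') = length qs'" using p by (simp add: simple_path_from_init_def distinct_card)
    ultimately show "l \<in> {..card Q}" using p l by (simp add: simple_path_from_init_def)
  qed
  then have "finite ?S" using finite_subset by blast
  moreover have "length w \<in> ?S" using assms(2) by blast
  ultimately show ?thesis unfolding depth_def by simp
qed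

lemma path_last: "simple_path_from_init Sig delta I qs w \<Longrightarrow> last qs = qs ! length w"
  unfolding simple_path_from_init_def by (metis diff_Suc_1 last_conv_nth list.size(3) nat.distinct(1))

lemma path_ext:
  assumes po: "po_nfa Q Sig delta I F" and p: "simple_path_from_init Sig delta I qs w"
    and a: "a \<in> Sig" and pq: "r \<in> delta (last qs) a" "r \<noteq> last qs"
  shows "simple_path_from_init Sig delta I (qs @ [r]) (w @ [a])"
proof -
  have nfa: "nfa Q Sig delta I F" using po by (simp add: po_nfa_def)
  have lq: "last qs = qs ! length w" using path_last[OF p] .
  have len: "length qs = Suc (length w)" using p by (simp add: simple_path_from_init_def)
  have qQ: "last qs \<in> Q" using path_in_Q[OF nfa p] lq len by simp
  have rQ: "r \<in> Q" using nfa qQ a pq(1) unfolding nfa_def by blast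
  have "r \<notin> set qs"
  proof
    assume "r \<in> set qs"
    then obtain j where j: "j < length qs" "qs ! j = r" by (auto simp: in_set_conv_nth)
    then have "last qs \<in> delta_star delta {r} (drop j w)"
      using path_reach[OF p] lq len by auto
    moreover have "drop j w \<in> lists Sig" using p
      by (auto simp: simple_path_from_init_def dest: in_set_dropD)
    ultimately have "reach Sig delta r (last qs)" by (auto simp: reach_def)
    moreover have "reach Sig delta (last qs) r" unfolding reach_def
      using a pq(1) by (intro bexI[of _ "[a]"]) auto
    ultimately show False using po rQ qQ pq(2) by (auto simp: po_nfa_def)
  qed
  moreover have "hd (qs @ [r]) = hd qs" using len by (cases qs) auto
  ultimately show ?thesis using p a pq lq len unfolding simple_path_from_init_def
    by (auto simp: nth_append less_Suc_eq)
qed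

lemma take_past:
  assumes "c \<in> set (take j (y0 @ b # y'))" "c \<notin> set y0"
  shows "b \<in> set (take j (y0 @ b # y'))"
proof (cases "j \<le> length y0")
  case True then have "take j (y0 @ b # y') = take j y0" by simp
  with assms show ?thesis by (metis in_set_takeD)
next
  case False then show ?thesis by (cases "j - length y0") (auto simp: take_Cons')
qed

lemma decomp:
  assumes "\<not> set x \<subseteq> G"
  obtains x0 a x' where "x = x0 @ a # x'" "set x0 \<subseteq> G" "a \<notin> G"
proof -
  have "dropWhile (\<lambda>c. c \<in> G) x \<noteq> []" using assms by auto
  then obtain a x' where d: "dropWhile (\<lambda>c. c \<in> G) x = a # x'" by (cases "dropWhile (\<lambda>c. c \<in> G) x") auto
  have "x = takeWhile (\<lambda>c. c \<in> G) x @ a # x'" using d takeWhile_dropWhile_id by metis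
  moreover have "set (takeWhile (\<lambda>c. c \<in> G) x) \<subseteq> G" by (auto dest: set_takeWhileD)
  moreover have "a \<notin> G" using d by (metis hd_dropWhile list.sel(1) list.simps(3))
  ultimately show ?thesis using that by blast
qed

lemma main:
  assumes rpo: "rpo_nfa Q Sig delta {i} F" and comp: "complete_nfa Q Sig delta"
    and dep: "depth Sig delta {i} = k"
  shows "simple_path_from_init Sig delta {i} qs w \<Longrightarrow> length w + n = k \<Longrightarrow> x \<in> lists Sig
    \<Longrightarrow> y \<in> lists Sig \<Longrightarrow> sim_R_k n x y \<Longrightarrow>
    (delta_star delta {last qs} x \<inter> F \<noteq> {} \<longleftrightarrow> delta_star delta {last qs} y \<inter> F \<noteq> {})"
proof (induct n arbitrary: qs w x y)
  have po: "po_nfa Q Sig delta {i} F" using rpo by (simp add: rpo_nfa_def)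
  have nfa: "nfa Q Sig delta {i} F" using po by (simp add: po_nfa_def)
  {
    case 0
    let ?q = "last qs"
    have len: "length qs = Suc (length w)" using 0 by (simp add: simple_path_from_init_def)
    have qQ: "?q \<in> Q" using path_in_Q[OF nfa 0(1)] path_last[OF 0(1)] len by simp
    have loop: "delta ?q c = {?q}" if c: "c \<in> Sig" for c
    proof -
      have "?q \<in> delta ?q c"
      proof (rule ccontr)
        assume nq: "?q \<notin> delta ?q c"
        obtain r where r: "r \<in> delta ?q c" using comp qQ c by (auto simp: complete_nfa_def)
        then have "r \<noteq> ?q" using nq by auto
        from depth_ge[OF nfa path_ext[OF po 0(1) c r this]] dep 0(2) show False by simp
      qed
      then show ?thesis using rpo qQ c by (auto simp: rpo_nfa_def)
    qed
    have "delta_star delta {?q} x = {?q}" "delta_star delta {?q} y = {?q}"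
      using 0(3,4) loop by (auto intro!: delta_star_loop)
    then show ?case by simp
  }
  {
    case (Suc n)
    let ?q = "last qs"
    let ?G = "{c. ?q \<in> delta ?q c}"
    have len: "length qs = Suc (length w)" using Suc by (simp add: simple_path_from_init_def)
    have qQ: "?q \<in> Q" using path_in_Q[OF nfa Suc(2)] path_last[OF Suc(2)] len by simp
    have loopG: "\<forall>c\<in>set z. delta ?q c = {?q}" if "z \<in> lists Sig" "set z \<subseteq> ?G" for z
      using that rpo qQ unfolding rpo_nfa_def by blast
    show ?case
    proof (cases "set x \<subseteq> ?G")
      case True
      have "set y \<subseteq> ?G" using True sim_R_k_letter[OF _ Suc(6)] by auto
      then have "delta_star delta {?q} x = {?q}" "delta_star delta {?q} y = {?q}"
        using delta_star_loop[where delta=delta and q="last qs", OF loopG[OF Suc(4) True]] delta_star_loop[where delta=delta and q="last qs", OF loopG[OF Suc(5) \<open>set y \<subseteq> ?G\<close>]] by auto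
      then show ?thesis by simp
    next
      case False
      then obtain x0 a x' where x: "x = x0 @ a # x'" "set x0 \<subseteq> ?G" "a \<notin> ?G" by (rule decomp)
      have "a \<in> set y" using sim_R_k_letter[OF _ sim_R_k_sym[OF Suc(6)]] x by auto
      then have "\<not> set y \<subseteq> ?G" using x by auto
      then obtain y0 b y' where y: "y = y0 @ b # y'" "set y0 \<subseteq> ?G" "b \<notin> ?G" by (rule decomp)
      have "take (length x0 + 1) x = x0 @ [a]" using x by simp
      moreover have "length x0 + 1 \<le> length x" using x by simp
      ultimately obtain j where j: "sim_k (Suc n) (x0 @ [a]) (take j y)"
        using Suc(6) unfolding sim_R_k_def by metis
      have "a \<in> set (take j y)" using sim_k_letter[OF _ j] by simp
      then have "b \<in> set (take j y)" using take_past[of a j y0 b y'] y x by auto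
      then have "b \<in> set (x0 @ [a])" using sim_k_letter[OF _ sim_k_sym[OF j]] by simp
      then have ba: "b = a" using x y by auto
      have ax0: "a \<notin> set x0" "a \<notin> set y0" using x y ba by auto
      have sr: "sim_R_k n x' y'"
      proof -
        have h1: "\<forall>i\<le>length x. \<exists>j\<le>length y. sim_k (Suc n) (take i x) (take j y)"
          and h2: "\<forall>i\<le>length y. \<exists>j\<le>length x. sim_k (Suc n) (take i y) (take j x)"
          using Suc(6) unfolding sim_R_k_def by auto
        show ?thesis
          using half[OF h1 x(1) y(1)[unfolded ba] ax0] half[OF h2 y(1)[unfolded ba] x(1) ax0(2,1)]
          unfolding sim_R_k_def by simp
      qed
      have aS: "a \<in> Sig" using Suc(4) x by auto
      have x'S: "x' \<in> lists Sig" "y' \<in> lists Sig" using Suc(4,5) x y by auto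
      have dx: "delta_star delta {?q} x = (\<Union>r\<in>delta ?q a. delta_star delta {r} x')"
        using x loopG[of x0] Suc(4)
        by (simp add: delta_star_append delta_star_loop delta_star_union[of _ "delta _ a"])
      have dy: "delta_star delta {?q} y = (\<Union>r\<in>delta ?q a. delta_star delta {r} y')"
        using y ba loopG[of y0] Suc(5)
        by (simp add: delta_star_append delta_star_loop delta_star_union[of _ "delta _ a"])
      have eq: "delta_star delta {r} x' \<inter> F \<noteq> {} \<longleftrightarrow> delta_star delta {r} y' \<inter> F \<noteq> {}"
        if r: "r \<in> delta ?q a" for r
      proof -
        have "r \<noteq> ?q" using r x(3) by auto
        from path_ext[OF po Suc(2) aS r this] have p: "simple_path_from_init Sig delta {i} (qs @ [r]) (w @ [a])" .
        show ?thesis using Suc(1)[OF p _ x'S sr] Suc(3) by simp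
      qed
      show ?thesis unfolding dx dy using eq by blast
    qed
  }
qed

theorem lemma3:
  fixes Q :: "'q set" and Sig :: "'a set" and delta :: "'q \<Rightarrow> 'a \<Rightarrow> 'q set"
    and i :: 'q and F :: "'q set" and k :: nat
  assumes "rpo_nfa Q Sig delta {i} F"
    and "complete_nfa Q Sig delta"
    and "depth Sig delta {i} = k"
  shows "k_R_trivial k Sig (lang Sig delta {i} F)"
  unfolding k_R_trivial_def
proof (intro ballI impI)
  fix x y assume xy: "x \<in> lists Sig" "y \<in> lists Sig" "sim_R_k k x y"
  have "simple_path_from_init Sig delta {i} [i] []"
    by (simp add: simple_path_from_init_def)
  from main[OF assms this _ xy] show "x \<in> lang Sig delta {i} F \<longleftrightarrow> y \<in> lang Sig delta {i} F"
    using xy by (simp add: lang_def)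
qed

end
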